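(* Let $(X,\mathbb T,\pi)$ be a dynamical system on a complete metric space $(X,\rho)$ and $x\in X$. Assume (1) there is $\tau\in\mathbb T$, $\tau>0$, with $\lim_{t\to+\infty}\rho(\pi(t+\tau,x),\pi(t,x))=0$; (2) $x$ is positively asymptotically Poisson stable. Then $x$ is asymptotically $\tau$-periodic.
   Context: $\mathbb T$ is $\mathbb R_+$ or $\mathbb Z_+$; a dynamical system is a continuous $\pi:\mathbb T\times X\to X$ with $\pi(0,x)=x$, $\pi(t+s,x)=\pi(t,\pi(s,x))$. $\omega_x$ is the set of limits of $\pi(t_k,x)$ with $t_k\to+\infty$. A point $p$ is positively Poisson stable if $p\in\omega_p$; $x$ is positively asymptotically Poisson stable if there is a positively Poisson stable $p$ with $\rho(\pi(t,x),\pi(t,p))\to0$ as $t\to+\infty$. A point $p$ is $\tau$-periodic if $\pi(\tau,p)=p$; $x$ is asymptotically $\tau$-periodic if there is a $\tau$-periodic $p$ with $\lim_{t\to\infty}\rho(\pi(t,x),\pi(t,p))=0$. *)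

theory Defs
  imports "HOL-Analysis.Analysis"
begin

definition time_set :: "real set \<Rightarrow> bool" where
  "time_set T \<longleftrightarrow> T = {0..} \<or> T = range real"

definition dynamical_system :: "real set \<Rightarrow> (real \<Rightarrow> 'a::metric_space \<Rightarrow> 'a) \<Rightarrow> bool" where
  "dynamical_system T \<pi> \<longleftrightarrow> time_set T \<and>
     continuous_on (T \<times> UNIV) (\<lambda>(t, x). \<pi> t x) \<and>
     (\<forall>x. \<pi> 0 x = x) \<and>
     (\<forall>t\<in>T. \<forall>s\<in>T. \<forall>x. \<pi> (t + s) x = \<pi> t (\<pi> s x))"

definition at_top_in :: "real set \<Rightarrow> real filter" where
  "at_top_in T = inf at_top (principal T)"

definition omega_limit :: "real set \<Rightarrow> (real \<Rightarrow> 'a::metric_space \<Rightarrow> 'a) \<Rightarrow> 'a \<Rightarrow> 'a set" where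
  "omega_limit T \<pi> x = {y. \<exists>tk :: nat \<Rightarrow> real. (\<forall>k. tk k \<in> T) \<and>
      filterlim tk at_top sequentially \<and> (\<lambda>k. \<pi> (tk k) x) \<longlonglongrightarrow> y}"

definition pos_poisson_stable :: "real set \<Rightarrow> (real \<Rightarrow> 'a::metric_space \<Rightarrow> 'a) \<Rightarrow> 'a \<Rightarrow> bool" where
  "pos_poisson_stable T \<pi> p \<longleftrightarrow> p \<in> omega_limit T \<pi> p"

definition pos_asymp_poisson_stable :: "real set \<Rightarrow> (real \<Rightarrow> 'a::metric_space \<Rightarrow> 'a) \<Rightarrow> 'a \<Rightarrow> bool" where
  "pos_asymp_poisson_stable T \<pi> x \<longleftrightarrow> (\<exists>p. pos_poisson_stable T \<pi> p \<and>
      ((\<lambda>t. dist (\<pi> t x) (\<pi> t p)) \<longlongrightarrow> 0) (at_top_in T))"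

definition periodic_point :: "(real \<Rightarrow> 'a \<Rightarrow> 'a) \<Rightarrow> real \<Rightarrow> 'a \<Rightarrow> bool" where
  "periodic_point \<pi> \<tau> p \<longleftrightarrow> \<pi> \<tau> p = p"

definition asymp_periodic :: "real set \<Rightarrow> (real \<Rightarrow> 'a::metric_space \<Rightarrow> 'a) \<Rightarrow> real \<Rightarrow> 'a \<Rightarrow> bool" where
  "asymp_periodic T \<pi> \<tau> x \<longleftrightarrow> (\<exists>p. periodic_point \<pi> \<tau> p \<and>
      ((\<lambda>t. dist (\<pi> t x) (\<pi> t p)) \<longlongrightarrow> 0) (at_top_in T))"

end

theory Submission
  imports Defs
begin

lemma ts_add: assumes "time_set T" "t \<in> T" "s \<in> T" shows "t + s \<in> T"
  using assms unfolding time_set_def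
proof (elim disjE)
  assume "T = range real" then show ?thesis using assms
    by (auto simp flip: of_nat_add)
qed auto

lemma cont_pi: assumes "dynamical_system T \<pi>" "\<tau> \<in> T"
  shows "continuous_on UNIV (\<pi> \<tau>)"
proof -
  have c: "continuous_on (T \<times> UNIV) (\<lambda>(t, x). \<pi> t x)" using assms unfolding dynamical_system_def by auto
  have "continuous_on UNIV (\<lambda>y. (\<lambda>(t, x). \<pi> t x) (\<tau>, y))"
    using continuous_on_compose2[OF c, of UNIV "\<lambda>y. (\<tau>, y)"] assms(2)
      continuous_on_Pair[OF continuous_on_const continuous_on_id, of UNIV \<tau>]
    by auto
  then show ?thesis by simp
qed

theorem mainTheorem4:
  fixes T :: "real set" and \<pi> :: "real \<Rightarrow> 'a::complete_space \<Rightarrow> 'a"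
    and x :: 'a and \<tau> :: real
  assumes "dynamical_system T \<pi>"
    and "\<tau> \<in> T" and "\<tau> > 0"
    and "((\<lambda>t. dist (\<pi> (t + \<tau>) x) (\<pi> t x)) \<longlongrightarrow> 0) (at_top_in T)"
    and "pos_asymp_poisson_stable T \<pi> x"
  shows "asymp_periodic T \<pi> \<tau> x"
proof -
  have ts: "time_set T" using assms(1) unfolding dynamical_system_def by auto
  obtain p where pp: "pos_poisson_stable T \<pi> p"
    and lim: "((\<lambda>t. dist (\<pi> t x) (\<pi> t p)) \<longlongrightarrow> 0) (at_top_in T)"
    using assms(5) unfolding pos_asymp_poisson_stable_def by auto
  have evT: "eventually (\<lambda>t. t \<in> T) (at_top_in T)"
    unfolding at_top_in_def by (simp add: eventually_inf_principal)
  have shift: "filterlim (\<lambda>t. t + \<tau>) (at_top_in T) (at_top_in T)"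
    unfolding at_top_in_def filterlim_inf filterlim_principal
  proof
    have "filterlim (\<lambda>t. t + \<tau>) at_top at_top" using filterlim_tendsto_add_at_top[OF tendsto_const filterlim_ident, of \<tau>] by (simp only: add.commute)
    then show "filterlim (\<lambda>t. t + \<tau>) at_top (inf at_top (principal T))"
      using filterlim_mono inf_le1 order_refl by blast
    show "\<forall>\<^sub>F t in inf at_top (principal T). t + \<tau> \<in> T"
      by (simp add: eventually_inf_principal ts_add[OF ts _ assms(2)])
  qed
  have l2: "((\<lambda>t. dist (\<pi> (t+\<tau>) x) (\<pi> (t+\<tau>) p)) \<longlongrightarrow> 0) (at_top_in T)"
    using filterlim_compose[OF lim shift] by simp
  have g: "((\<lambda>t. dist (\<pi> (t+\<tau>) p) (\<pi> t p)) \<longlongrightarrow> 0) (at_top_in T)"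
  proof (rule tendsto_sandwich[where f="\<lambda>_. 0"])
    show "\<forall>\<^sub>F t in at_top_in T. 0 \<le> dist (\<pi> (t+\<tau>) p) (\<pi> t p)" by simp
    show "\<forall>\<^sub>F t in at_top_in T. dist (\<pi> (t+\<tau>) p) (\<pi> t p) \<le>
      dist (\<pi> (t+\<tau>) x) (\<pi> (t+\<tau>) p) + dist (\<pi> (t + \<tau>) x) (\<pi> t x) + dist (\<pi> t x) (\<pi> t p)"
    proof (intro always_eventually allI)
      fix t
      have "dist (\<pi> (t+\<tau>) p) (\<pi> t p) \<le> dist (\<pi> (t+\<tau>) p) (\<pi> (t+\<tau>) x) + dist (\<pi> (t+\<tau>) x) (\<pi> t p)"
        by (rule dist_triangle)
      moreover have "dist (\<pi> (t+\<tau>) x) (\<pi> t p) \<le> dist (\<pi> (t+\<tau>) x) (\<pi> t x) + dist (\<pi> t x) (\<pi> t p)"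
        by (rule dist_triangle)
      moreover have "dist (\<pi> (t+\<tau>) p) (\<pi> (t+\<tau>) x) = dist (\<pi> (t+\<tau>) x) (\<pi> (t+\<tau>) p)"
        by (rule dist_commute)
      ultimately show "dist (\<pi> (t+\<tau>) p) (\<pi> t p) \<le>
        dist (\<pi> (t+\<tau>) x) (\<pi> (t+\<tau>) p) + dist (\<pi> (t + \<tau>) x) (\<pi> t x) + dist (\<pi> t x) (\<pi> t p)"
        by linarith
    qed
    have "((\<lambda>t. dist (\<pi> (t+\<tau>) x) (\<pi> (t+\<tau>) p) + dist (\<pi> (t + \<tau>) x) (\<pi> t x) + dist (\<pi> t x) (\<pi> t p)) \<longlongrightarrow> 0 + 0 + 0) (at_top_in T)"
      by (intro tendsto_add l2 assms(4) lim)
    then show "((\<lambda>t. dist (\<pi> (t+\<tau>) x) (\<pi> (t+\<tau>) p) + dist (\<pi> (t + \<tau>) x) (\<pi> t x) + dist (\<pi> t x) (\<pi> t p)) \<longlongrightarrow> 0) (at_top_in T)"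
      by simp
  qed simp
  obtain tk where tkT: "\<forall>k. tk k \<in> T" and tkl: "filterlim tk at_top sequentially"
    and tkp: "(\<lambda>k. \<pi> (tk k) p) \<longlonglongrightarrow> p"
    using pp unfolding pos_poisson_stable_def omega_limit_def by auto
  have tkf: "filterlim tk (at_top_in T) sequentially"
    unfolding at_top_in_def filterlim_inf filterlim_principal using tkT tkl by simp
  have d0: "(\<lambda>k. dist (\<pi> (tk k + \<tau>) p) (\<pi> (tk k) p)) \<longlonglongrightarrow> 0"
    using filterlim_compose[OF g tkf] by simp
  have eq: "\<pi> (tk k + \<tau>) p = \<pi> \<tau> (\<pi> (tk k) p)" for k
    using assms(1) tkT assms(2) unfolding dynamical_system_def by (metis add.commute)
  have c: "continuous_on UNIV (\<pi> \<tau>)" by (rule cont_pi[OF assms(1,2)])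
  have a: "(\<lambda>k. \<pi> (tk k + \<tau>) p) \<longlonglongrightarrow> \<pi> \<tau> p"
    unfolding eq using continuous_on_tendsto_compose[OF c tkp] by simp
  have "(\<lambda>k. dist (\<pi> (tk k + \<tau>) p) (\<pi> (tk k) p)) \<longlonglongrightarrow> dist (\<pi> \<tau> p) p"
    by (intro tendsto_dist a tkp)
  then have "dist (\<pi> \<tau> p) p = 0" using d0 LIMSEQ_unique by blast
  then have "periodic_point \<pi> \<tau> p" unfolding periodic_point_def by simp
  then show ?thesis unfolding asymp_periodic_def using lim by blast
qed

end
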